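(* Let $q$ be a power of an odd prime and let $n$ be a positive integer with $\gcd\big(n,\frac{q-1}{2}\big)=1$. Then the number of elements $a\in\mathbb{F}_q$ for which the binomial $x^n\big(x^{\frac{q-1}{2}}+a\big)$ is a permutation polynomial of $\mathbb{F}_q$ equals $$\frac{q-2+(-1)^n}{2}.$$
   Context: A polynomial $f\in\mathbb{F}_q[x]$ is a permutation polynomial of $\mathbb{F}_q$ if the map $c\mapsto f(c)$ is a bijection of $\mathbb{F}_q$. *)

theory Defs
  imports "HOL-Computational_Algebra.Polynomial"
begin

definition permutation_polynomial :: "'a::field poly \<Rightarrow> bool" where
  "permutation_polynomial f \<longleftrightarrow> bij (poly f)"

end

theory Submission
  imports Defs
begin

lemma fiber_count:
  assumes "finite X" "finite Y" "f ` X \<subseteq> Y" "\<And>y. y \<in> Y \<Longrightarrow> card {x\<in>X. f x = y} = k"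
  shows "card X = k * card Y"
proof -
  have "X = (\<Union>y\<in>Y. {x\<in>X. f x = y})" using assms(3) by blast
  hence "card X = card (\<Union>y\<in>Y. {x\<in>X. f x = y})" by simp
  also have "\<dots> = (\<Sum>y\<in>Y. card {x\<in>X. f x = y})"
    using assms(1,2) by (intro card_UN_disjoint) auto
  also have "\<dots> = (\<Sum>y\<in>Y. k)" using assms(4) by simp
  finally show ?thesis by simp
qed

lemma neg_self:
  fixes x :: "'a::field"
  assumes "(2::'a) \<noteq> 0" "x = -x"
  shows "x = 0"
proof -
  have "x + x = x + -x" using assms(2) by (rule arg_cong[where f="\<lambda>t. x + t"])
  hence "x + x = 0" by (simp only: add.right_inverse)
  hence "2 * x = 0" by (simp only: mult_2)
  thus ?thesis using assms(1) by simp
qed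

lemma fermat_field:
  fixes x :: "'a::{finite,field}"
  assumes "x \<noteq> 0"
  shows "x ^ (card (UNIV::'a set) - 1) = 1"
proof -
  let ?N = "UNIV - {0::'a}"
  have bij: "bij_betw (\<lambda>y. x*y) ?N ?N"
    by (rule bij_betw_byWitness[where f'="\<lambda>y. y / x"]) (use assms in auto)
  have "(\<Prod>y\<in>?N. x*y) = (\<Prod>y\<in>?N. y)" using prod.reindex_bij_betw[OF bij, of "\<lambda>y. y"] by simp
  hence "x ^ card ?N * (\<Prod>y\<in>?N. y) = (\<Prod>y\<in>?N. y)" by (simp add: prod.distrib)
  moreover have "(\<Prod>y\<in>?N. y) \<noteq> 0" by simp
  ultimately have "x ^ card ?N = 1" by simp
  moreover have "card ?N = card (UNIV::'a set) - 1" by (simp add: card_Diff_singleton)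
  ultimately show ?thesis by simp
qed

lemma card_zero: "of_nat (card (UNIV::'a::{finite,field} set)) = (0::'a)"
proof -
  have bij: "bij_betw (\<lambda>y. y+1) (UNIV::'a set) UNIV"
    by (rule bij_betw_byWitness[where f'="\<lambda>y. y - 1"]) auto
  have "(\<Sum>y\<in>UNIV. y + 1) = (\<Sum>y\<in>(UNIV::'a set). y)"
    using sum.reindex_bij_betw[OF bij, of "\<lambda>y. y"] by simp
  thus ?thesis by (simp add: sum.distrib)
qed

lemma two_nz:
  assumes "odd (card (UNIV::'a::{finite,field} set))"
  shows "(2::'a) \<noteq> 0"
proof
  assume h: "(2::'a) = 0"
  obtain k where k: "card (UNIV::'a set) = 2*k+1" using assms oddE by blast
  have "(of_nat (card (UNIV::'a set))::'a) = 2 * of_nat k + 1" by (simp add: k)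
  also have "\<dots> = 1" using h by simp
  finally show False using card_zero[where 'a='a] by simp
qed

lemma roots_le:
  fixes c :: "'a::field"
  assumes "m > 0"
  shows "card {x::'a. x^m = c} \<le> m"
proof -
  let ?p = "[:-c:] + monom 1 m"
  have deg: "degree ?p = m" using assms by (subst degree_add_eq_right) (auto simp: degree_monom_eq)
  hence "?p \<noteq> 0" using assms by auto
  hence "card {x. poly ?p x = 0} \<le> degree ?p" by (rule card_poly_roots_bound)
  moreover have "{x. poly ?p x = 0} = {x::'a. x^m = c}" by (auto simp: poly_monom)
  ultimately show ?thesis using deg by simp
qed

lemma card_ge2: "card (UNIV::'a::{finite,field} set) \<ge> 2"
proof -
  have "card {0::'a, 1} \<le> card (UNIV::'a set)" by (rule card_mono) auto
  thus ?thesis by simp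
qed

lemma m_facts:
  assumes "odd (card (UNIV::'a::{finite,field} set))" "m = (card (UNIV::'a set) - 1) div 2"
  shows "card (UNIV::'a set) = 2*m+1" "m > 0" "card (UNIV - {0::'a}) = 2*m"
proof -
  show 1: "card (UNIV::'a set) = 2*m+1" using assms card_ge2[where 'a='a] by presburger
  show "m > 0" using 1 card_ge2[where 'a='a] by linarith
  show "card (UNIV - {0::'a}) = 2*m" using 1 by (simp add: card_Diff_singleton)
qed

lemma eta_sq:
  assumes "odd (card (UNIV::'a::{finite,field} set))" "m = (card (UNIV::'a set) - 1) div 2"
    and "(x::'a) \<noteq> 0"
  shows "(x^m)^2 = 1"
proof -
  have "(x^m)^2 = x^(card (UNIV::'a set) - 1)" using m_facts[OF assms(1,2)]
    by (simp add: power_mult[symmetric] mult.commute)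
  thus ?thesis using fermat_field[OF assms(3)] by simp
qed

lemma eta_pm:
  assumes "odd (card (UNIV::'a::{finite,field} set))" "m = (card (UNIV::'a set) - 1) div 2"
    and "(x::'a) \<noteq> 0"
  shows "x^m = 1 \<or> x^m = -1"
  using eta_sq[OF assms] power2_eq_1_iff by blast

lemma one_ne_m1:
  assumes "odd (card (UNIV::'a::{finite,field} set))"
  shows "(1::'a) \<noteq> -1"
proof
  assume "(1::'a) = -1"
  hence "(2::'a) = 0" by (metis one_add_one add.right_inverse)
  thus False using two_nz[OF assms] by simp
qed

lemma squares_card:
  assumes "odd (card (UNIV::'a::{finite,field} set))" "m = (card (UNIV::'a set) - 1) div 2"
  shows "card {z::'a. \<exists>b. b \<noteq> 0 \<and> z = b^2} = m"
proof -
  have img: "(\<lambda>b. b^2) ` (UNIV - {0::'a}) \<subseteq> {z::'a. \<exists>b. b \<noteq> 0 \<and> z = b^2}" by blast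
  have fib: "card {x \<in> UNIV - {0}. x^2 = y} = 2" if yin: "y \<in> {z::'a. \<exists>b. b \<noteq> 0 \<and> z = b^2}" for y
  proof -
    obtain b where b: "b \<noteq> 0" "y = b^2" using yin by blast
    have "{x \<in> UNIV - {0}. x^2 = y} = {b, -b}"
    proof (intro equalityI subsetI)
      fix x assume "x \<in> {x \<in> UNIV - {0}. x^2 = y}"
      hence "x^2 = b^2" using b by simp
      thus "x \<in> {b, -b}" by (simp add: power2_eq_iff)
    next
      fix x assume "x \<in> {b, -b}"
      thus "x \<in> {x \<in> UNIV - {0}. x^2 = y}" using b by auto
    qed
    moreover have "b \<noteq> -b" using neg_self[OF two_nz[OF assms(1)], of b] b by blast
    ultimately show ?thesis by simp
  qed
  have "card (UNIV - {0::'a}) = 2 * card {z::'a. \<exists>b. b \<noteq> 0 \<and> z = b^2}"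
    by (rule fiber_count[OF _ _ img fib]) auto
  thus ?thesis using m_facts[OF assms] by simp
qed

lemma eta_one_iff:
  assumes "odd (card (UNIV::'a::{finite,field} set))" "m = (card (UNIV::'a set) - 1) div 2"
    and "(z::'a) \<noteq> 0"
  shows "z^m = 1 \<longleftrightarrow> (\<exists>b. b \<noteq> 0 \<and> z = b^2)"
proof -
  let ?S = "{z::'a. \<exists>b. b \<noteq> 0 \<and> z = b^2}"
  let ?R = "{z::'a. z^m = 1}"
  have sub: "?S \<subseteq> ?R"
  proof
    fix z assume "z \<in> ?S"
    then obtain b where "b \<noteq> 0" "z = b^2" by auto
    thus "z \<in> ?R" using eta_sq[OF assms(1,2), of b] by (simp add: power_mult[symmetric] mult.commute)
  qed
  have "card ?R \<le> card ?S" using roots_le[of m "1::'a"] m_facts[OF assms(1,2)] squares_card[OF assms(1,2)] by simp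
  moreover have "card ?S \<le> card ?R" using sub by (intro card_mono) auto
  ultimately have "?S = ?R" using sub by (intro card_subset_eq) auto
  thus ?thesis by auto
qed

lemma nonsquare_exists:
  assumes "odd (card (UNIV::'a::{finite,field} set))" "m = (card (UNIV::'a set) - 1) div 2"
  shows "\<exists>x::'a. x \<noteq> 0 \<and> x^m = -1"
proof (rule ccontr)
  assume "\<not> ?thesis"
  hence "UNIV - {0::'a} \<subseteq> {x. x^m = 1}" using eta_pm[OF assms] by blast
  hence "card (UNIV - {0::'a}) \<le> card {x::'a. x^m = 1}" by (intro card_mono) auto
  also have "\<dots> \<le> m" using roots_le m_facts[OF assms] by blast
  finally show False using m_facts[OF assms] by simp
qed

lemma hyperbola_card:
  assumes "odd (card (UNIV::'a::{finite,field} set))"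
  shows "card {(a::'a,b). a^2 - b^2 = 1} = card (UNIV::'a set) - 1"
proof -
  have two: "(2::'a) \<noteq> 0" using two_nz[OF assms] .
  have f1: "(2::'a)*2 \<noteq> 0" using two by (metis mult_eq_0_iff)
  have f2: "(2::'a)*2 = 4" by simp
  have four: "(4::'a) \<noteq> 0" using f1 f2 by metis
  let ?T = "{(u::'a,v). u*v = 1}"
  have T: "?T = (\<lambda>u. (u, inverse u)) ` (UNIV - {0})"
    by (auto simp: field_simps image_iff)
  have "card ?T = card (UNIV - {0::'a})" unfolding T by (rule card_image) (auto simp: inj_on_def)
  hence cT: "card ?T = card (UNIV::'a set) - 1" by (simp add: card_Diff_singleton)
  have "bij_betw (\<lambda>(u,v). ((u+v)/2, (v-u)/2)) ?T {(a,b). a^2 - b^2 = 1}"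
  proof (rule bij_betw_byWitness[where f'="\<lambda>(a::'a,b::'a). (a-b, a+b)"])
    show "\<forall>x\<in>?T. (\<lambda>(a,b). (a-b, a+b)) ((\<lambda>(u,v). ((u+v)/2, (v-u)/2)) x) = x"
      using two four by (auto simp: field_simps)
    show "\<forall>y\<in>{(a::'a,b). a^2 - b^2 = 1}. (\<lambda>(u::'a,v). ((u+v)/2, (v-u)/2)) ((\<lambda>(a,b). (a-b, a+b)) y) = y"
      using two four by (auto simp: field_simps)
    show "(\<lambda>(u,v). ((u+v)/2, (v-u)/2)) ` ?T \<subseteq> {(a,b). a^2 - b^2 = 1}"
      using two four by (auto simp: field_simps power2_eq_square)
    show "(\<lambda>(a,b). (a-b, a+b)) ` {(a,b). a^2 - b^2 = 1} \<subseteq> ?T"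
      by (auto simp: field_simps power2_eq_square)
  qed
  hence "card ?T = card {(a::'a,b). a^2 - b^2 = 1}" by (rule bij_betw_same_card)
  thus ?thesis using cT by simp
qed

lemma A_card:
  assumes "odd (card (UNIV::'a::{finite,field} set))"
  shows "2 * card {a::'a. \<exists>b. b \<noteq> 0 \<and> a^2 - 1 = b^2} + 3 = card (UNIV::'a set)"
proof -
  have two: "(2::'a) \<noteq> 0" using two_nz[OF assms] .
  have pm: "(1::'a) \<noteq> -1" using one_ne_m1[OF assms] .
  let ?S = "{(a::'a,b). a^2 - b^2 = 1}"
  let ?S' = "{(a::'a,b). b \<noteq> 0 \<and> a^2 - b^2 = 1}"
  let ?A = "{a::'a. \<exists>b. b \<noteq> 0 \<and> a^2 - 1 = b^2}"
  have "?S = ?S' \<union> {(1,0),(-1,0)}" by (auto simp: power2_eq_1_iff)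
  hence "card ?S = card (?S' \<union> {(1,0),(-1,0)})" by simp
  also have "\<dots> = card ?S' + card {(1::'a,0::'a),(-1,0)}" by (rule card_Un_disjoint) auto
  finally have "card ?S = card ?S' + 2" using pm by simp
  hence cS': "card ?S' + 3 = card (UNIV::'a set)"
    using hyperbola_card[OF assms] card_ge2[where 'a='a] by linarith
  have "card ?S' = 2 * card ?A"
  proof (rule fiber_count[where f=fst])
    show "fst ` ?S' \<subseteq> ?A" by (auto simp: algebra_simps)
    fix a assume "a \<in> ?A"
    then obtain b where b: "b \<noteq> 0" "a^2 - 1 = b^2" by auto
    have "{x \<in> ?S'. fst x = a} = {(a,b), (a,-b)}"
      using b by (auto simp: algebra_simps power2_eq_iff)
    moreover have "b \<noteq> -b" using neg_self[OF two, of b] b by blast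
    ultimately show "card {x \<in> ?S'. fst x = a} = 2" by simp
  qed auto
  thus ?thesis using cS' by simp
qed

lemma root_eq:
  fixes x y :: "'a::field"
  assumes "x \<noteq> 0" "y \<noteq> 0" "x^n = y^n" "x^m = y^m" "gcd n m = 1" "n > 0"
  shows "x = y"
proof -
  obtain s t where st: "n * s = m * t + 1" using bezout_nat[of n m] assms(5,6) by auto
  let ?z = "x / y"
  have zn: "?z^n = 1" "?z^m = 1" using assms by (simp_all add: power_divide)
  have "?z^(n*s) = 1" using zn by (simp add: power_mult)
  moreover have "?z^(m*t+1) = ?z" using zn by (simp add: power_mult)
  ultimately have "?z = 1" using st by simp
  thus ?thesis using assms(2) by simp
qed

lemma pp_iff:
  fixes a :: "'a::{finite,field}"
  assumes odd: "odd (card (UNIV::'a set))" and md: "m = (card (UNIV::'a set) - 1) div 2"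
    and n: "n > 0" and g: "gcd n m = 1"
  shows "bij (\<lambda>x::'a. x^n * (x^m + a)) \<longleftrightarrow> (a \<noteq> 1 \<and> a \<noteq> -1 \<and> (a^2-1)^m = (-1)^(n+1))"
proof -
  let ?F = "\<lambda>x::'a. x^n * (x^m + a)"
  have two: "(2::'a) \<noteq> 0" using two_nz[OF odd] .
  have pm: "(1::'a) \<noteq> -1" using one_ne_m1[OF odd] .
  have mf: "card (UNIV - {0::'a}) = 2*m" "m > 0" using m_facts[OF odd md] by auto
  have epm: "\<And>x::'a. x \<noteq> 0 \<Longrightarrow> x^m = 1 \<or> x^m = -1" using eta_pm[OF odd md] by blast
  have esq: "\<And>x::'a. x \<noteq> 0 \<Longrightarrow> (x^m)^2 = 1" using eta_sq[OF odd md] by blast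
  have Fm: "(?F x)^m = (x^m)^n * (x^m + a)^m" for x
  proof -
    have "(x^n)^m = (x^m)^n" by (metis power_mult mult.commute)
    thus ?thesis by (simp add: power_mult_distrib)
  qed
  have sq: "a^2 - 1 = (1+a)*(a-1)" by (simp add: algebra_simps power2_eq_square)
  have "((-1::'a)^n)^2 = ((-1)^2)^n" by (metis power_mult mult.commute)
  hence sgn: "((-1::'a)^n)^2 = 1" by simp
  show ?thesis
  proof
    assume "bij ?F"
    hence inj: "inj ?F" by (simp add: bij_def)
    have a1: "a \<noteq> 1"
    proof
      assume "a = 1"
      obtain x :: 'a where "x \<noteq> 0" "x^m = -1" using nonsquare_exists[OF odd md] by blast
      hence "?F x = ?F 0" using n \<open>a = 1\<close> by simp
      hence "x = 0" by (rule injD[OF inj])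
      thus False using \<open>x \<noteq> 0\<close> by simp
    qed
    have a2: "a \<noteq> -1"
    proof
      assume "a = -1"
      hence "?F 1 = ?F 0" using n by simp
      hence "(1::'a) = 0" by (rule injD[OF inj])
      thus False by simp
    qed
    have nz1: "1 + a \<noteq> 0" using a2 by (metis add.commute add_eq_0_iff)
    have nz2: "a - 1 \<noteq> 0" using a1 by simp
    show "a \<noteq> 1 \<and> a \<noteq> -1 \<and> (a^2-1)^m = (-1)^(n+1)"
    proof (intro conjI a1 a2, rule ccontr)
      assume ne: "(a^2-1)^m \<noteq> (-1)^(n+1)"
      have "a^2 - 1 \<noteq> 0" using sq nz1 nz2 by simp
      hence "(a^2-1)^m = 1 \<or> (a^2-1)^m = -1" using epm by blast
      hence c: "(1+a)^m * (a-1)^m = (-1)^n" using ne pm sq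
        by (cases "even n") (auto simp: power_mult_distrib)
      have c2: "(-1)^n * (a-1)^m = (1+a)^m"
      proof -
        have "(-1)^n * (a-1)^m = (1+a)^m * (1+a)^m * (a-1)^m * (-1)^n"
          using esq[OF nz1] by (simp add: power2_eq_square)
        also have "\<dots> = (1+a)^m * ((-1)^n)^2" using c by (simp add: power2_eq_square algebra_simps)
        finally show ?thesis using sgn by simp
      qed
      let ?e = "(1+a)^m"
      have img: "?F ` (UNIV - {0}) \<subseteq> {y. y^m = ?e}"
      proof
        fix y assume "y \<in> ?F ` (UNIV - {0})"
        then obtain x where x: "x \<noteq> 0" "y = ?F x" by auto
        have Fy: "y^m = (x^m)^n * (x^m + a)^m" using x(2) Fm[of x] by simp
        from epm[OF x(1)] show "y \<in> {y. y^m = ?e}"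
        proof
          assume "x^m = 1" thus ?thesis using Fy by simp
        next
          assume "x^m = -1"
          hence "y^m = (-1)^n * (a - 1)^m" using Fy by simp
          thus ?thesis using c2 by simp
        qed
      qed
      have "card (UNIV - {0::'a}) \<le> card {y::'a. y^m = ?e}"
        using inj img by (intro card_inj_on_le) (auto intro: inj_on_subset)
      also have "\<dots> \<le> m" using roots_le mf by blast
      finally show False using mf by simp
    qed
  next
    assume "a \<noteq> 1 \<and> a \<noteq> -1 \<and> (a^2-1)^m = (-1)^(n+1)"
    hence a1: "a \<noteq> 1" and a2: "a \<noteq> -1" and c: "(a^2-1)^m = (-1)^(n+1)" by auto
    have nz1: "1 + a \<noteq> 0" using a2 by (metis add.commute add_eq_0_iff)
    have nz2: "a - 1 \<noteq> 0" using a1 by simp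
    have c': "(1+a)^m * (a-1)^m = - ((-1)^n)" using c sq by (simp add: power_mult_distrib)
    have Fnz: "\<And>x. x \<noteq> 0 \<Longrightarrow> ?F x \<noteq> 0"
    proof -
      fix x :: 'a assume x: "x \<noteq> 0"
      have "x^m + a \<noteq> 0"
      proof (cases "x^m = 1")
        case True thus ?thesis using nz1 by simp
      next
        case False
        hence "x^m = -1" using epm[OF x] by blast
        moreover have "-1 + a = a - 1" by simp
        ultimately show ?thesis using nz2 by simp
      qed
      thus "?F x \<noteq> 0" using x by simp
    qed
    have neq: "(-1::'a)^n \<noteq> - ((-1)^n)"
    proof
      assume h: "(-1::'a)^n = - ((-1)^n)"
      have "(-1::'a)^n = 0" by (rule neg_self[OF two h])
      thus False by simp
    qed
    have bad: False if "x^m = 1" "y^m = -1" "?F x = ?F y" "x \<noteq> 0" "y \<noteq> 0" for x y :: 'a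
    proof -
      have h: "(?F x)^m = (?F y)^m" using that(3) by simp
      have "(?F x)^m = (1+a)^m" using Fm[of x] that(1) by simp
      moreover have "(?F y)^m = (-1)^n * (-1+a)^m" using Fm[of y] that(2) by simp
      moreover have "-1 + a = a - 1" by simp
      ultimately have e: "(1+a)^m = (-1)^n * (a-1)^m" using h by simp
      have "(1+a)^m * (a-1)^m = (-1)^n * ((a-1)^m)^2" using e by (simp add: power2_eq_square)
      hence "(1+a)^m * (a-1)^m = (-1)^n" using esq[OF nz2] by simp
      thus False using c' neq by simp
    qed
    have "inj ?F"
    proof (rule injI)
      fix x y :: 'a assume eq: "?F x = ?F y"
      show "x = y"
      proof (cases "x = 0 \<or> y = 0")
        case True
        thus ?thesis using eq Fnz n by (metis power_0_left mult_zero_left not_gr0)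
      next
        case False
        hence x: "x \<noteq> 0" and y: "y \<noteq> 0" by auto
        have em: "x^m = y^m" using epm[OF x] epm[OF y] bad[of x y] bad[of y x] eq x y by metis
        have "x^m + a \<noteq> 0" using Fnz[OF x] by auto
        hence "x^n = y^n" using eq em by simp
        thus ?thesis using root_eq[OF x y _ em g n] by simp
      qed
    qed
    thus "bij ?F" by (simp add: bij_def finite_UNIV_inj_surj)
  qed
qed

theorem theorem3p2:
  fixes n :: nat
  assumes "odd (card (UNIV :: 'a::{finite,field} set))"
    and "n > 0"
    and "gcd n ((card (UNIV :: 'a set) - 1) div 2) = 1"
  shows "real (card {a :: 'a. permutation_polynomial
             ([:0, 1:] ^ n * ([:0, 1:] ^ ((card (UNIV :: 'a set) - 1) div 2) + [:a:]))})
         = (real (card (UNIV :: 'a set)) - 2 + (-1) ^ n) / 2"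
proof -
  define m where "m = (card (UNIV :: 'a set) - 1) div 2"
  note odd = assms(1)
  have pm: "(1::'a) \<noteq> -1" using one_ne_m1[OF odd] .
  let ?A = "{a::'a. \<exists>b. b \<noteq> 0 \<and> a^2 - 1 = b^2}"
  have cA: "2 * card ?A + 3 = card (UNIV::'a set)" using A_card[OF odd] .
  have sq0: "(a::'a)^2 - 1 = 0 \<longleftrightarrow> a = 1 \<or> a = -1" for a
    using power2_eq_1_iff[of a] by simp
  have set: "{a :: 'a. permutation_polynomial
             ([:0, 1:] ^ n * ([:0, 1:] ^ m + [:a:]))} = {a. a \<noteq> 1 \<and> a \<noteq> -1 \<and> (a^2-1)^m = (-1)^(n+1)}"
  proof -
    have "\<And>a::'a. poly ([:0, 1:] ^ n * ([:0, 1:] ^ m + [:a:])) = (\<lambda>x. x^n * (x^m + a))"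
      by (rule ext) simp
    thus ?thesis unfolding permutation_polynomial_def
      using pp_iff[OF odd m_def assms(2) assms(3)[folded m_def]] by simp
  qed
  have cU: "card {a::'a. a^2 - 1 \<noteq> 0} + 2 = card (UNIV::'a set)"
  proof -
    have "{a::'a. a^2 - 1 \<noteq> 0} = UNIV - {1,-1}" using sq0 by auto
    thus ?thesis using pm card_ge2[where 'a='a]
      by (simp add: card_Diff_subset)
  qed
  show ?thesis
  proof (cases "even n")
    case False
    have "{a. a \<noteq> 1 \<and> a \<noteq> -1 \<and> (a^2-1)^m = (-1)^(n+1)} = ?A"
    proof -
      have "(-1::'a)^(n+1) = 1" using False by simp
      moreover have "(a \<noteq> 1 \<and> a \<noteq> -1 \<and> (a^2-1)^m = 1) \<longleftrightarrow> a \<in> ?A" for a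
        using eta_one_iff[OF odd m_def, of "a^2-1"] sq0[of a] by auto
      ultimately show ?thesis by auto
    qed
    thus ?thesis using set cA False unfolding m_def[symmetric] by simp
  next
    case True
    have "{a. a \<noteq> 1 \<and> a \<noteq> -1 \<and> (a^2-1)^m = (-1)^(n+1)} = {a::'a. a^2 - 1 \<noteq> 0} - ?A"
    proof -
      have "(-1::'a)^(n+1) = -1" using True by simp
      moreover have "(a \<noteq> 1 \<and> a \<noteq> -1 \<and> (a^2-1)^m = -1) \<longleftrightarrow> a \<in> {a::'a. a^2 - 1 \<noteq> 0} - ?A" for a
        using eta_one_iff[OF odd m_def, of "a^2-1"] sq0[of a] eta_pm[OF odd m_def, of "a^2-1"] pm
        by auto
      ultimately show ?thesis by auto
    qed
    moreover have "?A \<subseteq> {a::'a. a^2 - 1 \<noteq> 0}" by auto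
    ultimately have "card {a :: 'a. permutation_polynomial
             ([:0, 1:] ^ n * ([:0, 1:] ^ m + [:a:]))} = card {a::'a. a^2 - 1 \<noteq> 0} - card ?A"
      using set by (simp add: card_Diff_subset)
    thus ?thesis using cA cU True unfolding m_def[symmetric] by simp
  qed
qed

end
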